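(* The tenth order mock theta function $\psi_{10}(q)=\sum_{n\ge0}\frac{q^{\binom{n+1}2}}{(q;q^2)_n}$ is the generating function $\sum_\pi q^{|\pi|}$ over partitions $\pi$ with $n$ copies of $n$ (including the empty one) in which, with parts in ascending lexicographic order, the weighted difference between each part and the preceding one is exactly $-1$, and the smallest part is of the form $j_j$.
   Context: $M=\{m_i: 1\le i\le m\}$; a partition with $n$ copies of $n$ is a finite multiset of elements of $M$, $|\pi|$ the sum of values. Lexicographic order: $m_i>n_j$ iff $m>n$, or $m=n$ and $i>j$. Weighted difference $((m_i-n_j))=m-n-i-j$. $(a;q)_n=\prod_{j=0}^{n-1}(1-aq^j)$. *)

theory Defs
  imports "HOL-Analysis.Analysis" "HOL-Library.Multiset"
begin

definition qpoch :: "complex \<Rightarrow> complex \<Rightarrow> nat \<Rightarrow> complex" where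
  "qpoch a q n = (\<Prod>j<n. 1 - a * q ^ j)"

definition psi10_term :: "complex \<Rightarrow> nat \<Rightarrow> complex" where
  "psi10_term q n = q ^ ((n + 1) choose 2) / qpoch q (q ^ 2) n"

definition psi10 :: "complex \<Rightarrow> complex" where
  "psi10 q = (\<Sum>n. psi10_term q n)"

text \<open>A part m_i is encoded as the pair (m, i) with 1 \<le> i \<le> m.
\<close>
definition valid_part :: "nat \<times> nat \<Rightarrow> bool" where
  "valid_part p \<longleftrightarrow> 1 \<le> snd p \<and> snd p \<le> fst p"

definition lex_le :: "nat \<times> nat \<Rightarrow> nat \<times> nat \<Rightarrow> bool" where
  "lex_le r p \<longleftrightarrow> fst r < fst p \<or> (fst r = fst p \<and> snd r \<le> snd p)"

definition wdiff :: "nat \<times> nat \<Rightarrow> nat \<times> nat \<Rightarrow> int" where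
  "wdiff p r = int (fst p) - int (fst r) - int (snd p) - int (snd r)"

definition ncopy_partition :: "(nat \<times> nat) multiset \<Rightarrow> bool" where
  "ncopy_partition P \<longleftrightarrow> (\<forall>p \<in># P. valid_part p)"

definition psize :: "(nat \<times> nat) multiset \<Rightarrow> nat" where
  "psize P = (\<Sum>p \<in># P. fst p)"

definition psi10_partition :: "(nat \<times> nat) multiset \<Rightarrow> bool" where
  "psi10_partition P \<longleftrightarrow> ncopy_partition P \<and>
     (\<exists>xs. mset xs = P \<and> sorted_wrt lex_le xs \<and>
        (\<forall>k. Suc k < length xs \<longrightarrow> wdiff (xs ! Suc k) (xs ! k) = -1) \<and>
        (xs \<noteq> [] \<longrightarrow> fst (hd xs) = snd (hd xs)))"

definition psi10_count :: "nat \<Rightarrow> nat" where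
  "psi10_count N = card {P. psi10_partition P \<and> psize P = N}"

end

theory Submission
  imports Defs
begin

fun pf :: "nat \<Rightarrow> nat \<Rightarrow> nat list \<Rightarrow> (nat \<times> nat) list" where
  "pf m i [] = []"
| "pf m i (a # as) = (m + i + a, Suc a) # pf (m + i + a) (Suc a) as"

fun H :: "nat list \<Rightarrow> nat" where
  "H [] = 0"
| "H (a # as) = (2 * length as + 1) * a + length as + H as"

definition W :: "nat list \<Rightarrow> nat" where
  "W as = sum_list (map fst (pf 0 1 as))"

lemma pf_size: "sum_list (map fst (pf m i as)) = length as * (m + i) + H as"
  by (induction as arbitrary: m i) (auto simp: algebra_simps)

lemma W_eq: "W as = length as + H as"
  unfolding W_def pf_size by simp

lemma W_Cons: "W (a # as) = W as + Suc (length as) + (2 * length as + 1) * a"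
  unfolding W_eq by simp

lemma H_ge: "x \<in> set as \<Longrightarrow> x \<le> H as"
  by (induction as) auto

lemma finite_W: "finite {as. W as = N}"
proof -
  have "{as. W as = N} \<subseteq> {as. set as \<subseteq> {..N} \<and> length as \<le> N}"
    using H_ge by (fastforce simp: W_eq)
  moreover have "finite {as. set as \<subseteq> {..N} \<and> length as \<le> N}"
    by (rule finite_lists_length_le) simp
  ultimately show ?thesis by (rule finite_subset)
qed

lemma map_snd_pf: "map snd (pf m i as) = map Suc as"
  by (induction as arbitrary: m i) auto

lemma pf_fst_gt: "1 \<le> i \<Longrightarrow> p \<in> set (pf m i as) \<Longrightarrow> m < fst p"
  by (induction as arbitrary: m i) fastforce+

lemma pf_sorted: "1 \<le> i \<Longrightarrow> sorted_wrt (\<lambda>x y. fst x < fst y) (pf m i as)"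
proof (induction as arbitrary: m i)
  case Nil then show ?case by simp
next
  case (Cons a as)
  have "\<forall>p\<in>set (pf (m + i + a) (Suc a) as). m + i + a < fst p"
    using pf_fst_gt[of "Suc a" _ "m + i + a"] by auto
  then show ?case using Cons by simp
qed

lemma pf_valid: "1 \<le> m + i \<Longrightarrow> p \<in> set (pf m i as) \<Longrightarrow> valid_part p"
proof (induction as arbitrary: m i)
  case Nil then show ?case by simp
next
  case (Cons a as)
  then show ?case using Cons.IH[of "m + i + a" "Suc a"] by (auto simp: valid_part_def)
qed

lemma pf_wdiff: "Suc k < length (pf m i as) \<Longrightarrow> wdiff (pf m i as ! Suc k) (pf m i as ! k) = -1"
proof (induction as arbitrary: m i k)
  case Nil then show ?case by simp
next
  case (Cons a as)
  show ?case
  proof (cases k)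
    case 0
    then show ?thesis using Cons.prems
      by (cases as) (auto simp: wdiff_def)
  next
    case (Suc k')
    then show ?thesis using Cons by auto
  qed
qed

lemma sorted_lex: "sorted_wrt (\<lambda>x y. fst x < fst y) xs \<Longrightarrow> sorted_wrt lex_le xs"
  by (rule sorted_wrt_mono_rel[of _ "\<lambda>x y. fst x < fst y"]) (auto simp: lex_le_def)

lemma sorted_fst_unique:
  fixes xs ys :: "(nat \<times> nat) list"
  shows "sorted_wrt (\<lambda>x y. fst x < fst y) xs \<Longrightarrow> sorted_wrt (\<lambda>x y. fst x < fst y) ys
   \<Longrightarrow> set xs = set ys \<Longrightarrow> xs = ys"
proof (induction xs arbitrary: ys)
  case Nil then show ?case by simp
next
  case (Cons x xs)
  then obtain y ys' where ys: "ys = y # ys'" by (cases ys) auto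
  have "x = y"
  proof (rule ccontr)
    assume "x \<noteq> y"
    then have "x \<in> set ys'" "y \<in> set xs" using Cons.prems ys by auto
    moreover have "fst y < fst x" using \<open>x \<in> set ys'\<close> Cons.prems(2) ys by simp
    moreover have "fst x < fst y" using \<open>y \<in> set xs\<close> Cons.prems(1) by simp
    ultimately show False by linarith
  qed
  moreover have "x \<notin> set xs" "y \<notin> set ys'" using Cons.prems ys by auto
  ultimately have "set xs = set ys'" using Cons.prems ys by auto
  then show ?case using Cons ys \<open>x = y\<close> by simp
qed

lemma pf_inverse:
  assumes "\<forall>p\<in>set xs. valid_part p"
    and "\<forall>k. Suc k < length xs \<longrightarrow> wdiff (xs ! Suc k) (xs ! k) = -1"
    and "xs \<noteq> [] \<longrightarrow> fst (hd xs) + 1 = m + i + snd (hd xs)"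
  shows "xs = pf m i (map (\<lambda>p. snd p - 1) xs)"
  using assms
proof (induction xs arbitrary: m i)
  case Nil then show ?case by simp
next
  case (Cons x xs)
  obtain u v where x: "x = (u, v)" by force
  have v: "1 \<le> v" "v \<le> u" using Cons.prems(1) x by (auto simp: valid_part_def)
  have u: "u = m + i + (v - 1)" using Cons.prems(3) x v by simp
  have w: "\<forall>k. Suc k < length xs \<longrightarrow> wdiff (xs ! Suc k) (xs ! k) = -1"
  proof (intro allI impI)
    fix k assume "Suc k < length xs"
    then show "wdiff (xs ! Suc k) (xs ! k) = -1"
      using Cons.prems(2)[rule_format, of "Suc k"] by simp
  qed
  have h: "xs \<noteq> [] \<longrightarrow> fst (hd xs) + 1 = u + v + snd (hd xs)"
  proof
    assume "xs \<noteq> []"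
    then have "wdiff (hd xs) x = -1"
      using Cons.prems(2)[rule_format, of 0] by (cases xs) auto
    then show "fst (hd xs) + 1 = u + v + snd (hd xs)"
      using x by (simp add: wdiff_def)
  qed
  have "xs = pf u v (map (\<lambda>p. snd p - 1) xs)"
    using Cons.IH[of u v] Cons.prems(1) w h by simp
  then show ?case using x u v by simp
qed

lemma count_eq: "psi10_count N = card {as. W as = N}"
proof -
  define f where "f as = mset (pf 0 1 as)" for as
  have psz: "psize (mset xs) = sum_list (map fst xs)" for xs
    unfolding psize_def by (metis mset_map sum_mset_sum_list)
  have inj: "inj_on f {as. W as = N}"
  proof (rule inj_onI)
    fix as bs assume "f as = f bs"
    then have "set (pf 0 1 as) = set (pf 0 1 bs)" unfolding f_def by (metis set_mset_mset)
    then have "pf 0 1 as = pf 0 1 bs"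
      by (intro sorted_fst_unique pf_sorted) auto
    then have "map Suc as = map Suc bs" by (metis map_snd_pf)
    then show "as = bs" by (simp add: inj_map_eq_map)
  qed
  have img: "f ` {as. W as = N} = {P. psi10_partition P \<and> psize P = N}"
  proof (intro equalityI subsetI)
    fix P assume "P \<in> f ` {as. W as = N}"
    then obtain as where P: "P = f as" "W as = N" by auto
    have "psi10_partition P"
      unfolding psi10_partition_def ncopy_partition_def
    proof (intro conjI exI[of _ "pf 0 1 as"])
      show "\<forall>p\<in>#P. valid_part p" using P pf_valid[of 0 1] by (auto simp: f_def)
      show "mset (pf 0 1 as) = P" using P by (simp add: f_def)
      show "sorted_wrt lex_le (pf 0 1 as)" by (intro sorted_lex pf_sorted) simp
      show "\<forall>k. Suc k < length (pf 0 1 as) \<longrightarrow> wdiff (pf 0 1 as ! Suc k) (pf 0 1 as ! k) = -1"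
        using pf_wdiff by blast
      show "pf 0 1 as \<noteq> [] \<longrightarrow> fst (hd (pf 0 1 as)) = snd (hd (pf 0 1 as))"
        by (cases as) auto
    qed
    moreover have "psize P = N" using P by (simp add: f_def psz W_def)
    ultimately show "P \<in> {P. psi10_partition P \<and> psize P = N}" by simp
  next
    fix P assume "P \<in> {P. psi10_partition P \<and> psize P = N}"
    then obtain xs where xs: "mset xs = P" "\<forall>p\<in>set xs. valid_part p"
      "\<forall>k. Suc k < length xs \<longrightarrow> wdiff (xs ! Suc k) (xs ! k) = -1"
      "xs \<noteq> [] \<longrightarrow> fst (hd xs) = snd (hd xs)" "psize P = N"
      unfolding psi10_partition_def ncopy_partition_def by auto
    define as where "as = map (\<lambda>p. snd p - 1) xs"
    have "xs = pf 0 1 as"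
      unfolding as_def by (rule pf_inverse) (use xs in auto)
    then have "P = f as" "W as = N" using xs(1) xs(5) psz[of xs] by (auto simp: f_def W_def)
    then show "P \<in> f ` {as. W as = N}" by auto
  qed
  show ?thesis unfolding psi10_count_def img[symmetric] using card_image[OF inj] by simp
qed


primrec tt :: "'a::field \<Rightarrow> nat \<Rightarrow> 'a" where
  "tt x 0 = 1"
| "tt x (Suc k) = x ^ Suc k / (1 - x ^ (2 * k + 1)) * tt x k"

lemma has_sum_times:
  fixes f g :: "_ \<Rightarrow> 'a::{banach, real_normed_field}"
  assumes fa: "(f has_sum a) A" and gb: "(g has_sum b) B"
    and nf: "(\<lambda>x. norm (f x)) summable_on A" and ng: "(\<lambda>y. norm (g y)) summable_on B"
  shows "((\<lambda>(x,y). f x * g y) has_sum (a * b)) (A \<times> B)"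
proof -
  define h where "h = (\<lambda>(x,y). f x * g y)"
  have "(\<lambda>p. norm (h p)) summable_on Sigma A (\<lambda>_. B)"
  proof (rule Infinite_Sum.abs_summable_on_Sigma_iff[THEN iffD2], intro conjI ballI)
    fix x assume "x \<in> A"
    show "(\<lambda>y. norm (h (x,y))) summable_on B"
      using summable_on_cmult_right[OF ng, of "norm (f x)"] by (simp add: norm_mult h_def)
  next
    have eq: "infsum (\<lambda>y. norm (h (x,y))) B = norm (f x) * infsum (\<lambda>y. norm (g y)) B" for x
      by (simp add: norm_mult infsum_cmult_right' h_def)
    moreover have "(\<lambda>x. norm (norm (f x) * infsum (\<lambda>y. norm (g y)) B)) summable_on A"
      using summable_on_cmult_left[OF nf, of "abs (infsum (\<lambda>y. norm (g y)) B)"] by (simp add: abs_mult)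
    ultimately show "(\<lambda>x. norm (infsum (\<lambda>y. norm (h (x,y))) B)) summable_on A" by (simp add: eq)
  qed
  then have "h summable_on A \<times> B" by (rule abs_summable_summable)
  have "(h has_sum (a * b)) (Sigma A (\<lambda>_. B))"
  proof (rule has_sum_SigmaI[where g = "\<lambda>x. f x * b"])
    show "((\<lambda>y. h (x, y)) has_sum f x * b) B" if "x \<in> A" for x
      unfolding h_def using has_sum_cmult_right[OF gb, of "f x"] by simp
    show "((\<lambda>x. f x * b) has_sum a * b) A" using has_sum_cmult_left[OF fa] .
    show "h summable_on Sigma A (\<lambda>_. B)" by fact
  qed
  then show ?thesis unfolding h_def by simp
qed

lemma has_sum_geom:
  fixes z :: "'a::{banach, real_normed_field}"
  assumes "norm z < 1"
  shows "((\<lambda>n. z ^ n) has_sum (1 / (1 - z))) UNIV"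
  by (rule norm_summable_imp_has_sum) (use assms in \<open>auto simp: norm_power intro: summable_geometric geometric_sums\<close>)

lemma powW_Cons:
  fixes y :: "'a::comm_monoid_mult"
  assumes "length bs = k"
  shows "y ^ W (a # bs) = y ^ Suc k * (y ^ (2 * k + 1)) ^ a * y ^ W bs"
proof -
  have e: "W (a # bs) = (W bs + Suc k) + (2 * k + 1) * a" using assms by (simp add: W_Cons)
  have "y ^ W (a # bs) = y ^ (W bs + Suc k) * y ^ ((2 * k + 1) * a)"
    by (subst e, rule power_add)
  also have "\<dots> = (y ^ W bs * y ^ Suc k) * (y ^ (2 * k + 1)) ^ a"
    by (subst power_add, subst power_mult, rule refl)
  finally show ?thesis by (simp add: mult_ac)
qed

lemma fiber_has_sum:
  fixes x :: "'a::{banach, real_normed_field}"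
  assumes x: "norm x < 1"
  shows "((\<lambda>as. x ^ W as) has_sum tt x k) {as. length as = k}
         \<and> (\<lambda>as. norm x ^ W as) summable_on {as. length as = k}"
proof (induction k)
  case 0
  have "{as. length as = (0::nat)} = {[]}" by auto
  then show ?case by (auto simp: W_eq intro: has_sum_finiteI)
next
  case (Suc k)
  define r where "r = norm x"
  have r: "0 \<le> r" "r < 1" using x by (auto simp: r_def)
  define L where "L = {bs :: nat list. length bs = k}"
  define c where "c = (\<lambda>(a, bs). a # bs :: nat list)"
  have img: "{as. length as = Suc k} = c ` (UNIV \<times> L)"
    by (auto simp: length_Suc_conv image_iff c_def L_def)
  have inj: "inj_on c (UNIV \<times> L)" by (auto simp: inj_on_def c_def)
  have z: "norm (x ^ (2 * k + 1)) < 1"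
    using r unfolding norm_power r_def[symmetric] by (subst power_less_one_iff) auto
  have zr: "norm (r ^ (2 * k + 1)) < 1"
  proof -
    have "r ^ (2 * k + 1) < 1" using power_less_one_iff[OF r(1), of "2*k+1"] r(2) by simp
    then show ?thesis using r by simp
  qed
  have IH1: "((\<lambda>as. x ^ W as) has_sum tt x k) L" and IH2: "(\<lambda>as. r ^ W as) summable_on L"
    using Suc by (auto simp: L_def r_def)
  have fa: "((\<lambda>a. x ^ Suc k * (x ^ (2 * k + 1)) ^ a) has_sum (x ^ Suc k * (1 / (1 - x ^ (2 * k + 1))))) UNIV"
    by (rule has_sum_cmult_right[OF has_sum_geom[OF z]])
  have far: "((\<lambda>a. r ^ Suc k * (r ^ (2 * k + 1)) ^ a) has_sum (r ^ Suc k * (1 / (1 - r ^ (2 * k + 1))))) UNIV"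
    by (rule has_sum_cmult_right[OF has_sum_geom[OF zr]])
  have nfa: "(\<lambda>a. norm (x ^ Suc k * (x ^ (2 * k + 1)) ^ a)) summable_on UNIV"
    using far unfolding r_def by (auto simp: norm_mult norm_power summable_on_def)
  have nfar: "(\<lambda>a. norm (r ^ Suc k * (r ^ (2 * k + 1)) ^ a)) summable_on UNIV"
    using far r by (auto simp: summable_on_def)
  have ng: "(\<lambda>as. norm (x ^ W as)) summable_on L"
    using IH2 by (simp add: norm_power r_def)
  have ngr: "(\<lambda>as. norm (r ^ W as)) summable_on L"
    using IH2 r by simp
  have eqW: "x ^ W (a # bs) = x ^ Suc k * (x ^ (2 * k + 1)) ^ a * x ^ W bs"
    "r ^ W (a # bs) = r ^ Suc k * (r ^ (2 * k + 1)) ^ a * r ^ W bs" if "bs \<in> L" for a bs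
    using that by (auto simp: L_def powW_Cons)
  have P1: "((\<lambda>(a, bs). x ^ Suc k * (x ^ (2 * k + 1)) ^ a * x ^ W bs) has_sum
      (x ^ Suc k * (1 / (1 - x ^ (2 * k + 1))) * tt x k)) (UNIV \<times> L)"
    by (rule has_sum_times[OF fa IH1 nfa ng])
  have P2: "((\<lambda>(a, bs). r ^ Suc k * (r ^ (2 * k + 1)) ^ a * r ^ W bs) has_sum
      (r ^ Suc k * (1 / (1 - r ^ (2 * k + 1))) * infsum (\<lambda>as. r ^ W as) L)) (UNIV \<times> L)"
    by (rule has_sum_times[OF far has_sum_infsum[OF IH2] nfar ngr])
  have "((\<lambda>as. x ^ W as) \<circ> c has_sum tt x (Suc k)) (UNIV \<times> L)"
    using P1 by (subst has_sum_cong[where g = "\<lambda>(a, bs). x ^ Suc k * (x ^ (2 * k + 1)) ^ a * x ^ W bs"])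
      (auto simp: c_def eqW)
  then have S1: "((\<lambda>as. x ^ W as) has_sum tt x (Suc k)) {as. length as = Suc k}"
    unfolding img by (subst has_sum_reindex[OF inj])
  define v where "v = r ^ Suc k * (1 / (1 - r ^ (2 * k + 1))) * infsum (\<lambda>as. r ^ W as) L"
  have "((\<lambda>as. r ^ W as) \<circ> c has_sum v) (UNIV \<times> L)"
    using P2 by (subst has_sum_cong[where g = "\<lambda>(a, bs). r ^ Suc k * (r ^ (2 * k + 1)) ^ a * r ^ W bs"])
      (auto simp: c_def eqW v_def)
  then have "((\<lambda>as. r ^ W as) has_sum v) {as. length as = Suc k}"
    unfolding img by (subst has_sum_reindex[OF inj])
  then have S2: "(\<lambda>as. r ^ W as) summable_on {as. length as = Suc k}"
    by (auto simp: summable_on_def)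
  show ?case using S1 S2 by (simp add: r_def)
qed


lemma tt_psi: "tt q k = psi10_term q k"
proof (induction k)
  case 0 then show ?case by (simp add: psi10_term_def qpoch_def numeral_2_eq_2)
next
  case (Suc k)
  have c: "Suc (Suc k) choose 2 = (Suc k choose 2) + Suc k"
    using binomial_Suc_Suc[of "Suc k" 1] by (simp add: numeral_2_eq_2)
  have p: "qpoch q (q ^ 2) (Suc k) = qpoch q (q ^ 2) k * (1 - q ^ (2 * k + 1))"
    by (simp add: qpoch_def power_mult[symmetric] mult_ac)
  have "psi10_term q (Suc k) = (q ^ Suc k * q ^ (Suc k choose 2)) / ((1 - q ^ (2 * k + 1)) * qpoch q (q ^ 2) k)"
    unfolding psi10_term_def p by (simp add: c power_add mult_ac)
  also have "\<dots> = q ^ Suc k / (1 - q ^ (2 * k + 1)) * psi10_term q k"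
    unfolding psi10_term_def by (simp add: times_divide_times_eq)
  finally show ?case using Suc by simp
qed

lemma tt_nonneg: "0 \<le> (r::real) \<Longrightarrow> r < 1 \<Longrightarrow> 0 \<le> tt r k"
proof (induction k)
  case 0 then show ?case by simp
next
  case (Suc k)
  have "r ^ (2 * k + 1) < 1" using power_less_one_iff[OF Suc.prems(1), of "2*k+1"] Suc.prems(2) by simp
  then show ?case using Suc by simp
qed

lemma tt_summable:
  assumes "0 \<le> (r::real)" "r < 1"
  shows "summable (tt r)"
proof -
  have "(\<lambda>n. r ^ n) \<longlonglongrightarrow> 0" using assms by (intro LIMSEQ_power_zero) auto
  moreover have "0 < (1 - r) / 2" using assms by simp
  ultimately obtain N where N: "\<And>n. n \<ge> N \<Longrightarrow> norm (r ^ n - 0) < (1 - r) / 2"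
    unfolding LIMSEQ_def dist_norm by blast
  show ?thesis
  proof (rule summable_ratio_test[of "1/2" N])
    fix n assume "N \<le> n"
    have a: "r ^ Suc n \<le> r ^ n" using assms by (auto intro: mult_left_le_one_le)
    have b: "r ^ n < (1 - r) / 2" using N[OF \<open>N \<le> n\<close>] assms by simp
    have d: "r ^ (2 * n + 1) \<le> r" using assms by (simp add: power_le_one mult_left_le)
    have pos: "0 < 1 - r ^ (2 * n + 1)" using d assms by simp
    have "r ^ Suc n / (1 - r ^ (2 * n + 1)) \<le> 1 / 2"
      using a b d pos by (simp add: divide_simps)
    moreover have "0 \<le> r ^ Suc n / (1 - r ^ (2 * n + 1))" using pos assms by simp
    ultimately have "r ^ Suc n / (1 - r ^ (2 * n + 1)) * tt r n \<le> 1 / 2 * tt r n"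
      using tt_nonneg[OF assms] by (intro mult_right_mono) auto
    then have "tt r (Suc n) \<le> 1 / 2 * tt r n" by simp
    then show "norm (tt r (Suc n)) \<le> 1 / 2 * norm (tt r n)"
      by (metis abs_of_nonneg real_norm_def tt_nonneg[OF assms])
    have "True"
      using tt_nonneg[OF assms, of n] tt_nonneg[OF assms, of "Suc n"] by simp
  qed simp
qed

theorem theorem26:
  fixes q :: complex
  assumes "norm q < 1"
  shows "summable (psi10_term q) \<and> (\<lambda>N. of_nat (psi10_count N) * q ^ N) sums psi10 q"
proof -
  define r where "r = norm q"
  have r: "0 \<le> r" "r < 1" using assms by (auto simp: r_def)
  define L where "L = (\<lambda>k::nat. {as :: nat list. length as = k})"
  have A: "((\<lambda>as. q ^ W as) has_sum tt q k) (L k)" "(\<lambda>as. r ^ W as) summable_on L k" for k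
    using fiber_has_sum[OF assms, of k] by (auto simp: L_def r_def)
  have Ar: "((\<lambda>as. r ^ W as) has_sum tt r k) (L k)" for k
    using fiber_has_sum[of r k] r by (auto simp: L_def)
  define F where "F = (\<lambda>p :: nat \<times> nat list. q ^ W (snd p))"
  have "(\<lambda>p. norm (F p)) summable_on Sigma UNIV L"
  proof (rule Infinite_Sum.abs_summable_on_Sigma_iff[THEN iffD2], intro conjI ballI)
    fix k :: nat
    show "(\<lambda>as. norm (F (k, as))) summable_on L k"
      using A(2)[of k] by (simp add: F_def norm_power r_def)
  next
    have eq: "infsum (\<lambda>as. norm (F (k, as))) (L k) = tt r k" for k
      using Ar[of k] by (simp add: F_def norm_power r_def infsumI)
    have "summable (\<lambda>k. norm (tt r k))"
      using tt_summable[OF r] tt_nonneg[OF r] by simp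
    then have "(\<lambda>k. norm (tt r k)) summable_on UNIV"
      by (subst summable_on_UNIV_nonneg_real_iff) auto
    then show "(\<lambda>k. norm (infsum (\<lambda>as. norm (F (k, as))) (L k))) summable_on UNIV"
      by (simp add: eq)
  qed
  then have "F summable_on Sigma UNIV L" by (rule abs_summable_summable)
  then obtain S where S: "(F has_sum S) (Sigma UNIV L)" by (auto simp: summable_on_def)
  have "(tt q has_sum S) UNIV"
    by (rule has_sum_Sigma'[OF S]) (use A(1) in \<open>simp add: F_def\<close>)
  then have "tt q sums S" by (rule has_sum_imp_sums)
  then have ps: "psi10_term q sums S" by (simp add: tt_psi[abs_def])
  then have sumS: "psi10 q = S" unfolding psi10_def by (metis sums_unique)
  define h where "h = (\<lambda>as :: nat list. (length as, as))"
  have hinj: "inj h" by (auto simp: inj_on_def h_def)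
  have himg: "h ` UNIV = Sigma UNIV L" by (auto simp: h_def L_def image_iff)
  have "((F \<circ> h) has_sum S) UNIV"
    using S unfolding himg[symmetric] by (subst (asm) has_sum_reindex[OF hinj])
  then have G: "((\<lambda>as. q ^ W as) has_sum S) UNIV" by (simp add: F_def h_def o_def)
  define g where "g = (\<lambda>as :: nat list. (W as, as))"
  have ginj: "inj g" by (auto simp: inj_on_def g_def)
  have gimg: "g ` UNIV = Sigma UNIV (\<lambda>N. {as. W as = N})" by (auto simp: g_def image_iff)
  have "((F \<circ> g) has_sum S) UNIV" using G by (simp add: F_def g_def o_def)
  then have S2: "(F has_sum S) (Sigma UNIV (\<lambda>N. {as. W as = N}))"
    unfolding gimg[symmetric] by (subst has_sum_reindex[OF ginj])
  have fib: "((\<lambda>as. F (N, as)) has_sum (of_nat (card {as. W as = N}) * q ^ N)) {as. W as = N}" for N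
  proof (rule has_sum_finiteI[OF finite_W])
    have "sum (\<lambda>as. F (N, as)) {as. W as = N} = sum (\<lambda>as. q ^ N) {as. W as = N}"
      by (rule sum.cong) (auto simp: F_def)
    then show "of_nat (card {as. W as = N}) * q ^ N = sum (\<lambda>as. F (N, as)) {as. W as = N}"
      by simp
  qed
  have "((\<lambda>N. of_nat (card {as. W as = N}) * q ^ N) has_sum S) UNIV"
    by (rule has_sum_Sigma'[OF S2 fib])
  then have "(\<lambda>N. of_nat (psi10_count N) * q ^ N) sums S"
    by (simp add: count_eq has_sum_imp_sums)
  then show ?thesis using ps sumS by (auto simp: sums_iff)
qed

end
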